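(* $\mathfrak a_{11}(n)=\mathfrak a_{16}(n)$ for all $n\ge4$, and $\mathfrak a_{13}(n)=\mathfrak a_{20}(n)$ for all $n\ge3$.
   Context: Pauli matrices $I,X,Y,Z$; $A_jB_{j+1}$ denotes the length-$n$ Pauli string with $A$ at position $j$, $B$ at $j+1$, $I$ elsewhere. For a set $S$ of Pauli strings, $\mathrm{Lie}\langle S\rangle$ is the smallest real Lie subalgebra of $\mathfrak u(2^n)$ containing $\{iP:P\in S\}$. For a set $G$ of two-qubit strings, $G(n)=\mathrm{Lie}\langle A_jB_{j+1}:AB\in G,1\le j\le n-1\rangle$. Generating sets: $\mathfrak a_{11}=\{XY,YX,YZ\}$, $\mathfrak a_{16}=\{XY,YX,YZ,ZY\}$, $\mathfrak a_{13}=\{XX,YY,YZ\}$, $\mathfrak a_{20}=\{XX,YY,ZZ,ZY\}$. *)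

theory Defs
  imports Complex_Main "Jordan_Normal_Form.Schur_Decomposition"
begin

datatype pauli = PI | PX | PY | PZ

fun pauli_entry :: "pauli \<Rightarrow> nat \<Rightarrow> nat \<Rightarrow> complex" where
  "pauli_entry PI a b = (if a = b then 1 else 0)"
| "pauli_entry PX a b = (if a \<noteq> b then 1 else 0)"
| "pauli_entry PY a b = (if a = b then 0 else if a = 0 then - \<i> else \<i>)"
| "pauli_entry PZ a b = (if a = b then (if a = 0 then 1 else -1) else 0)"

text \<open>Matrix of a Pauli string (list of letters, position 0 is the leftmost / most
  significant tensor factor): the Kronecker product of the letters, a 2^n x 2^n matrix.\<close>
definition pauli_string_mat :: "pauli list \<Rightarrow> complex mat" where
  "pauli_string_mat ws = (let n = length ws in
     mat (2^n) (2^n) (\<lambda>(r, c). \<Prod>k<n. pauli_entry (ws ! k)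
        ((r div 2^(n - 1 - k)) mod 2) ((c div 2^(n - 1 - k)) mod 2)))"

definition real_lie_subalg_u :: "nat \<Rightarrow> complex mat set \<Rightarrow> bool" where
  "real_lie_subalg_u N L \<longleftrightarrow>
     L \<subseteq> carrier_mat N N \<and>
     (\<forall>A\<in>L. mat_adjoint A = - A) \<and>
     0\<^sub>m N N \<in> L \<and>
     (\<forall>A\<in>L. \<forall>B\<in>L. A + B \<in> L) \<and>
     (\<forall>A\<in>L. \<forall>r::real. complex_of_real r \<cdot>\<^sub>m A \<in> L) \<and>
     (\<forall>A\<in>L. \<forall>B\<in>L. A * B - B * A \<in> L)"

definition lie_gen :: "nat \<Rightarrow> pauli list set \<Rightarrow> complex mat set" where
  "lie_gen n S = \<Inter>{L. real_lie_subalg_u (2^n) L \<and>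
                      (\<forall>P\<in>S. \<i> \<cdot>\<^sub>m pauli_string_mat P \<in> L)}"

text \<open>A_j B_{j+1} with 0-based position j (j + 1 < n).\<close>
definition two_local :: "nat \<Rightarrow> nat \<Rightarrow> pauli \<Rightarrow> pauli \<Rightarrow> pauli list" where
  "two_local n j A B = replicate j PI @ [A, B] @ replicate (n - j - 2) PI"

definition G_alg :: "(pauli \<times> pauli) set \<Rightarrow> nat \<Rightarrow> complex mat set" where
  "G_alg G n = lie_gen n {two_local n j A B | j A B. (A, B) \<in> G \<and> j + 1 < n}"

definition a11 :: "(pauli \<times> pauli) set" where "a11 = {(PX,PY),(PY,PX),(PY,PZ)}"
definition a16 :: "(pauli \<times> pauli) set" where "a16 = {(PX,PY),(PY,PX),(PY,PZ),(PZ,PY)}"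
definition a13 :: "(pauli \<times> pauli) set" where "a13 = {(PX,PX),(PY,PY),(PY,PZ)}"
definition a20 :: "(pauli \<times> pauli) set" where "a20 = {(PX,PX),(PY,PY),(PZ,PZ),(PZ,PY)}"

end

theory Submission
  imports Defs
begin


fun lmul :: "pauli \<Rightarrow> pauli \<Rightarrow> complex \<times> pauli" where
  "lmul PI b = (1, b)"
| "lmul a PI = (1, a)"
| "lmul PX PX = (1, PI)" | "lmul PY PY = (1, PI)" | "lmul PZ PZ = (1, PI)"
| "lmul PX PY = (\<i>, PZ)" | "lmul PY PX = (-\<i>, PZ)"
| "lmul PY PZ = (\<i>, PX)" | "lmul PZ PY = (-\<i>, PX)"
| "lmul PZ PX = (\<i>, PY)" | "lmul PX PZ = (-\<i>, PY)"

definition smul :: "pauli list \<Rightarrow> pauli list \<Rightarrow> pauli list" where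
  "smul P Q = map2 (\<lambda>a b. snd (lmul a b)) P Q"
definition sphase :: "pauli list \<Rightarrow> pauli list \<Rightarrow> complex" where
  "sphase P Q = prod_list (map2 (\<lambda>a b. fst (lmul a b)) P Q)"

lemma smul_Cons[simp]: "smul (a#P) (b#Q) = snd (lmul a b) # smul P Q"
  by (simp add: smul_def)
lemma sphase_Cons[simp]: "sphase (a#P) (b#Q) = fst (lmul a b) * sphase P Q"
  by (simp add: sphase_def)
lemma smul_Nil[simp]: "smul [] [] = []" by (simp add: smul_def)
lemma sphase_Nil[simp]: "sphase [] [] = 1" by (simp add: sphase_def)
lemma length_smul[simp]: "length (smul P Q) = min (length P) (length Q)"
  by (simp add: smul_def)

lemma letter_prod:
  assumes "a < 2" "c < 2"
  shows "(\<Sum>b<2. pauli_entry A a b * pauli_entry B b c) =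
         fst (lmul A B) * pauli_entry (snd (lmul A B)) a c"
proof -
  have a: "a = 0 \<or> a = 1" and c: "c = 0 \<or> c = 1" using assms by auto
  show ?thesis
    using a c by (cases A; cases B) (auto simp: numeral_2_eq_2)
qed

lemma psm_carrier[simp]: "pauli_string_mat ws \<in> carrier_mat (2^length ws) (2^length ws)"
  by (simp add: pauli_string_mat_def Let_def)
lemma psm_dim[simp]: "dim_row (pauli_string_mat ws) = 2^length ws"
  "dim_col (pauli_string_mat ws) = 2^length ws"
  by (simp_all add: pauli_string_mat_def Let_def)

lemma bit_mod_aux:
  fixes r m n :: nat
  assumes "m < n"
  shows "r div 2^m mod 2 = (r mod 2^n) div 2^m mod 2"
proof -
  have "odd (r div 2^m) \<longleftrightarrow> odd ((r mod 2^n) div 2^m)"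
    using assms by (simp add: bit_iff_odd[symmetric] take_bit_eq_mod[symmetric] bit_take_bit_iff)
  thus ?thesis by (metis odd_iff_mod_2_eq_one mod2_eq_if)
qed



lemma psm_cons:
  assumes "length ws = n" "r < 2^Suc n" "c < 2^Suc n"
  shows "pauli_string_mat (A#ws) $$ (r,c) =
    pauli_entry A (r div 2^n) (c div 2^n) * pauli_string_mat ws $$ (r mod 2^n, c mod 2^n)"
proof -
  have rd: "r div 2^n mod 2 = r div 2^n" "c div 2^n mod 2 = c div 2^n"
    using assms(2,3) by (simp_all add: less_mult_imp_div_less)
  have "pauli_string_mat (A#ws) $$ (r,c) =
     (\<Prod>k<Suc n. pauli_entry ((A#ws) ! k) ((r div 2^(Suc n - 1 - k)) mod 2) ((c div 2^(Suc n - 1 - k)) mod 2))"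
    using assms by (simp add: pauli_string_mat_def Let_def)
  also have "\<dots> = pauli_entry A (r div 2^n) (c div 2^n) *
     (\<Prod>k<n. pauli_entry (ws ! k) ((r div 2^(n - 1 - k)) mod 2) ((c div 2^(n - 1 - k)) mod 2))"
    by (subst prod.lessThan_Suc_shift) (simp add: rd del: prod.lessThan_Suc)
  also have "(\<Prod>k<n. pauli_entry (ws ! k) ((r div 2^(n - 1 - k)) mod 2) ((c div 2^(n - 1 - k)) mod 2))
     = (\<Prod>k<n. pauli_entry (ws ! k) (((r mod 2^n) div 2^(n - 1 - k)) mod 2) (((c mod 2^n) div 2^(n - 1 - k)) mod 2))"
  proof (rule prod.cong[OF refl])
    fix k assume "k \<in> {..<n}"
    hence "n - 1 - k < n" by auto
    thus "pauli_entry (ws ! k) ((r div 2^(n - 1 - k)) mod 2) ((c div 2^(n - 1 - k)) mod 2) =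
      pauli_entry (ws ! k) (((r mod 2^n) div 2^(n - 1 - k)) mod 2) (((c mod 2^n) div 2^(n - 1 - k)) mod 2)"
      using bit_mod_aux[of "n - 1 - k" n r] bit_mod_aux[of "n - 1 - k" n c] by metis
  qed
  also have "\<dots> = pauli_string_mat ws $$ (r mod 2^n, c mod 2^n)"
    using assms by (simp add: pauli_string_mat_def Let_def)
  finally show ?thesis .
qed

lemma sum_double: "(\<Sum>k<2*m. f k) = (\<Sum>k<m. f k) + (\<Sum>k<m. f (k + m::nat))"
proof -
  have "(\<Sum>k<2*m. f k) = (\<Sum>k<m. f k) + (\<Sum>k=m..<2*m. f k)"
    by (metis le_add1 mult_2 sum.atLeastLessThan_concat lessThan_atLeast0 zero_le)
  also have "(\<Sum>k=m..<2*m. f k) = (\<Sum>k<m. f (k + m))"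
    by (metis add_0 lessThan_atLeast0 mult_2 sum.shift_bounds_nat_ivl)
  finally show ?thesis .
qed

lemma psm_mult:
  "length P = length Q \<Longrightarrow>
   pauli_string_mat P * pauli_string_mat Q = sphase P Q \<cdot>\<^sub>m pauli_string_mat (smul P Q)"
proof (induction P Q rule: list_induct2)
  case Nil
  show ?case
    by (rule eq_matI) (auto simp: pauli_string_mat_def scalar_prod_def)
next
  case (Cons A P B Q)
  define n where "n = length P"
  have lQ: "length Q = n" using Cons n_def by simp
  have ls: "length (smul P Q) = n" using lQ n_def by simp
  show ?case
  proof (rule eq_matI)
    fix i j assume i: "i < dim_row (sphase (A # P) (B # Q) \<cdot>\<^sub>m pauli_string_mat (smul (A # P) (B # Q)))"
      and j: "j < dim_col (sphase (A # P) (B # Q) \<cdot>\<^sub>m pauli_string_mat (smul (A # P) (B # Q)))"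
    have i2: "i < 2^Suc n" and j2: "j < 2^Suc n" using i j ls by auto
    let ?M = "pauli_string_mat"
    have im: "i mod 2^n < 2^n" "j mod 2^n < 2^n" by auto
    have id2: "i div 2^n < 2" "j div 2^n < 2" using i2 j2 by (simp_all add: less_mult_imp_div_less)
    have e1: "?M (A#P) $$ (i,k) * ?M (B#Q) $$ (k,j) = pauli_entry A (i div 2^n) 0 * pauli_entry B 0 (j div 2^n) * (?M P $$ (i mod 2^n,k) * ?M Q $$ (k,j mod 2^n))"
      if k: "k < 2^n" for k
    proof -
      have k2: "k < 2^Suc n" using k by simp
      have "?M (A#P) $$ (i,k) = pauli_entry A (i div 2^n) 0 * ?M P $$ (i mod 2^n,k)"
        using psm_cons[OF n_def[symmetric] i2 k2, of A] k by simp
      moreover have "?M (B#Q) $$ (k,j) = pauli_entry B 0 (j div 2^n) * ?M Q $$ (k,j mod 2^n)"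
        using psm_cons[OF lQ k2 j2, of B] k by simp
      ultimately show ?thesis by (simp only: mult_ac)
    qed
    have e2: "?M (A#P) $$ (i,k+2^n) * ?M (B#Q) $$ (k+2^n,j) = pauli_entry A (i div 2^n) 1 * pauli_entry B 1 (j div 2^n) * (?M P $$ (i mod 2^n,k) * ?M Q $$ (k,j mod 2^n))"
      if k: "k < 2^n" for k
    proof -
      have k2: "k + 2^n < 2^Suc n" using k by simp
      have dv: "(k + 2^n) div 2^n = 1" "(k + 2^n) mod 2^n = k" using k by simp_all
      have "?M (A#P) $$ (i,k+2^n) = pauli_entry A (i div 2^n) 1 * ?M P $$ (i mod 2^n,k)"
        using psm_cons[OF n_def[symmetric] i2 k2, of A] unfolding dv .
      moreover have "?M (B#Q) $$ (k+2^n,j) = pauli_entry B 1 (j div 2^n) * ?M Q $$ (k,j mod 2^n)"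
        using psm_cons[OF lQ k2 j2, of B] unfolding dv .
      ultimately show ?thesis by (simp only: mult_ac)
    qed
    have "(?M (A#P) * ?M (B#Q)) $$ (i,j) = (\<Sum>k<2*2^n. ?M (A#P) $$ (i,k) * ?M (B#Q) $$ (k,j))"
      using i2 j2 n_def lQ by (simp add: scalar_prod_def row_def col_def atLeast0LessThan)
    also have "\<dots> = (\<Sum>k<2^n. ?M (A#P) $$ (i,k) * ?M (B#Q) $$ (k,j)) +
        (\<Sum>k<2^n. ?M (A#P) $$ (i,k+2^n) * ?M (B#Q) $$ (k+2^n,j))"
      by (rule sum_double)
    also have "\<dots> = pauli_entry A (i div 2^n) 0 * pauli_entry B 0 (j div 2^n) *
         (\<Sum>k<2^n. ?M P $$ (i mod 2^n,k) * ?M Q $$ (k,j mod 2^n)) +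
        pauli_entry A (i div 2^n) 1 * pauli_entry B 1 (j div 2^n) *
         (\<Sum>k<2^n. ?M P $$ (i mod 2^n,k) * ?M Q $$ (k,j mod 2^n))"
      unfolding sum_distrib_left by (intro arg_cong2[where f="(+)"] sum.cong) (auto simp: e1 e2)
    finally have ch: "(?M (A#P) * ?M (B#Q)) $$ (i,j) =
        pauli_entry A (i div 2^n) 0 * pauli_entry B 0 (j div 2^n) *
         (\<Sum>k<2^n. ?M P $$ (i mod 2^n,k) * ?M Q $$ (k,j mod 2^n)) +
        pauli_entry A (i div 2^n) 1 * pauli_entry B 1 (j div 2^n) *
         (\<Sum>k<2^n. ?M P $$ (i mod 2^n,k) * ?M Q $$ (k,j mod 2^n))" .
    have "(\<Sum>k<2^n. ?M P $$ (i mod 2^n,k) * ?M Q $$ (k,j mod 2^n)) =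
       (?M P * ?M Q) $$ (i mod 2^n, j mod 2^n)"
      using im n_def lQ by (simp add: scalar_prod_def row_def col_def atLeast0LessThan)
    also have "\<dots> = sphase P Q * ?M (smul P Q) $$ (i mod 2^n, j mod 2^n)"
      using Cons.IH im n_def ls by simp
    finally have S: "(\<Sum>k<2^n. ?M P $$ (i mod 2^n,k) * ?M Q $$ (k,j mod 2^n)) =
        sphase P Q * ?M (smul P Q) $$ (i mod 2^n, j mod 2^n)" .
    have ch2: "(?M (A#P) * ?M (B#Q)) $$ (i,j) =
        (\<Sum>b<2. pauli_entry A (i div 2^n) b * pauli_entry B b (j div 2^n)) *
          (sphase P Q * ?M (smul P Q) $$ (i mod 2^n, j mod 2^n))"
      unfolding ch S by (simp add: numeral_2_eq_2 distrib_right)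
    have r1: "(sphase (A # P) (B # Q) \<cdot>\<^sub>m ?M (smul (A # P) (B # Q))) $$ (i,j)
        = sphase (A # P) (B # Q) * ?M (snd (lmul A B) # smul P Q) $$ (i,j)"
      using i2 j2 ls by simp
    have r2: "?M (snd (lmul A B) # smul P Q) $$ (i,j) =
       pauli_entry (snd (lmul A B)) (i div 2^n) (j div 2^n) * ?M (smul P Q) $$ (i mod 2^n, j mod 2^n)"
      by (rule psm_cons[OF ls i2 j2])
    show "(?M (A#P) * ?M (B#Q)) $$ (i,j) = (sphase (A # P) (B # Q) \<cdot>\<^sub>m ?M (smul (A # P) (B # Q))) $$ (i,j)"
      apply (subst r1, subst r2, subst ch2)
      by (simp only: letter_prod[OF id2] sphase_Cons mult_ac)
  qed (use Cons ls n_def in auto)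

qed


lemma smul_comm: "length P = length Q \<Longrightarrow> smul Q P = smul P Q"
proof (induction P Q rule: list_induct2)
  case (Cons x xs y ys) thus ?case by (cases x; cases y) auto
qed simp

lemma smult_smult_mat: "a \<cdot>\<^sub>m (b \<cdot>\<^sub>m A) = (a * b) \<cdot>\<^sub>m (A :: complex mat)"
  by (rule eq_matI) auto

lemma comm_step:
  assumes L: "real_lie_subalg_u N L" and lP: "length P = m" "length Q = m" and N: "N = 2^m"
  and hP: "\<i> \<cdot>\<^sub>m pauli_string_mat P \<in> L" and hQ: "\<i> \<cdot>\<^sub>m pauli_string_mat Q \<in> L"
  and ph: "sphase P Q = \<i> \<or> sphase P Q = -\<i>" and anti: "sphase Q P = - sphase P Q"
  shows "\<i> \<cdot>\<^sub>m pauli_string_mat (smul P Q) \<in> L"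
proof -
  let ?M = pauli_string_mat
  let ?A = "\<i> \<cdot>\<^sub>m ?M P" and ?B = "\<i> \<cdot>\<^sub>m ?M Q"
  have cP: "?M P \<in> carrier_mat N N" and cQ: "?M Q \<in> carrier_mat N N"
    using lP N by auto
  have cR: "?M (smul P Q) \<in> carrier_mat N N" using lP N by (metis length_smul min.idem psm_carrier)
  have AB: "?A * ?B = (\<i> * \<i> * sphase P Q) \<cdot>\<^sub>m ?M (smul P Q)"
    unfolding mult_smult_assoc_mat[OF cP smult_carrier_mat[OF cQ]] mult_smult_distrib[OF cP cQ]
      smult_smult_mat psm_mult[OF lP(1)[folded lP(2)]] by (simp add: mult.assoc)
  have BA: "?B * ?A = (\<i> * \<i> * sphase Q P) \<cdot>\<^sub>m ?M (smul P Q)"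
    unfolding mult_smult_assoc_mat[OF cQ smult_carrier_mat[OF cP]] mult_smult_distrib[OF cQ cP]
      smult_smult_mat psm_mult[OF lP(2)[folded lP(1)]] smul_comm[OF lP(1)[folded lP(2)]] by (simp add: mult.assoc)
  have cm: "\<forall>A\<in>L. \<forall>B\<in>L. A * B - B * A \<in> L" using L by (simp add: real_lie_subalg_u_def)
  have C: "?A * ?B - ?B * ?A \<in> L" using cm hP hQ by blast
  obtain r :: real where r: "\<i> \<cdot>\<^sub>m ?M (smul P Q) = complex_of_real r \<cdot>\<^sub>m (?A * ?B - ?B * ?A)"
  proof (cases "sphase P Q = \<i>")
    case True
    show ?thesis
      apply (rule that[of "-1/2"])
      unfolding AB BA anti True
      by (rule eq_matI) (use cR in auto)
  next
    case False
    hence F: "sphase P Q = -\<i>" using ph by auto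
    show ?thesis
      apply (rule that[of "1/2"])
      unfolding AB BA anti F
      by (rule eq_matI) (use cR in auto)
  qed
  have sc: "\<forall>A\<in>L. \<forall>r::real. complex_of_real r \<cdot>\<^sub>m A \<in> L" using L by (simp add: real_lie_subalg_u_def)
  show ?thesis unfolding r using sc C by blast
qed

definition emb :: "nat \<Rightarrow> nat \<Rightarrow> pauli list \<Rightarrow> pauli list" where
  "emb n s w = replicate s PI @ w @ replicate (n - s - length w) PI"

definition inL :: "complex mat set \<Rightarrow> nat \<Rightarrow> nat \<Rightarrow> pauli list \<Rightarrow> bool" where
  "inL L n s w \<longleftrightarrow> \<i> \<cdot>\<^sub>m pauli_string_mat (emb n s w) \<in> L"

lemma smul_append: "length xs = length ys \<Longrightarrow> smul (xs @ zs) (ys @ us) = smul xs ys @ smul zs us"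
  by (simp add: smul_def)
lemma sphase_append: "length xs = length ys \<Longrightarrow> sphase (xs @ zs) (ys @ us) = sphase xs ys * sphase zs us"
  by (simp add: sphase_def)
lemma smul_rep[simp]: "smul (replicate k PI) (replicate k PI) = replicate k PI"
  by (induction k) auto
lemma sphase_rep[simp]: "sphase (replicate k PI) (replicate k PI) = 1"
  by (induction k) auto

lemma wstep:
  assumes L: "real_lie_subalg_u (2^n) L" and sw: "s + length w \<le> n" and lw: "length w' = length w"
    and h1: "inL L n s w" and h2: "inL L n s w'"
    and ph: "sphase w w' = \<i> \<or> sphase w w' = -\<i>" and anti: "sphase w' w = - sphase w w'"
  shows "inL L n s (smul w w')"
proof -
  have e: "smul (emb n s w) (emb n s w') = emb n s (smul w w')"
    using lw by (simp add: emb_def smul_append)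
  have p1: "sphase (emb n s w) (emb n s w') = sphase w w'"
    using lw by (simp add: emb_def sphase_append)
  have p2: "sphase (emb n s w') (emb n s w) = sphase w' w"
    using lw by (simp add: emb_def sphase_append)
  have len: "length (emb n s w) = n" "length (emb n s w') = n" using sw lw by (auto simp: emb_def)
  show ?thesis
  proof -
    have "\<i> \<cdot>\<^sub>m pauli_string_mat (smul (emb n s w) (emb n s w')) \<in> L"
      by (rule comm_step[OF L len refl]) (use h1 h2 ph anti p1 p2 in \<open>auto simp: inL_def\<close>)
    thus ?thesis unfolding inL_def e .
  qed
qed

lemma emb_two: "s + t + 2 + u \<le> n \<Longrightarrow>
  emb n s (replicate t PI @ [A,B] @ replicate u PI) = two_local n (s+t) A B"
  unfolding emb_def two_local_def
  by (simp add: replicate_add[symmetric])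

lemma gen_inL:
  assumes H: "\<forall>P\<in>{two_local n j A B | j A B. (A, B) \<in> G \<and> j + 1 < n}. \<i> \<cdot>\<^sub>m pauli_string_mat P \<in> L"
    and G: "(A,B) \<in> G" and le: "s + t + 2 + u \<le> n"
  shows "inL L n s (replicate t PI @ [A,B] @ replicate u PI)"
proof -
  have "s + t + 1 < n" using le by simp
  hence "two_local n (s+t) A B \<in> {two_local n j A B | j A B. (A, B) \<in> G \<and> j + 1 < n}"
    using G by blast
  thus ?thesis unfolding inL_def emb_two[OF le] using H by blast
qed

lemma der11_0:
  assumes H: "\<forall>P\<in>{two_local n j A B | j A B. (A, B) \<in> a11 \<and> j + 1 < n}. \<i> \<cdot>\<^sub>m pauli_string_mat P \<in> L"
    and L: "real_lie_subalg_u (2^n) L" and sw: "s + 4 \<le> n"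
  shows "inL L n s [PZ,PY,PI,PI]"
proof -
  have g0: "inL L n s [PX,PY,PI,PI]" using gen_inL[OF H, of PX PY s "0" "Suc (Suc (0))"] sw by (simp add: a11_def)
  have g1: "inL L n s [PI,PX,PY,PI]" using gen_inL[OF H, of PX PY s "Suc (0)" "Suc (0)"] sw by (simp add: a11_def)
  have g2: "inL L n s [PI,PI,PX,PY]" using gen_inL[OF H, of PX PY s "Suc (Suc (0))" "0"] sw by (simp add: a11_def)
  have g3: "inL L n s [PY,PX,PI,PI]" using gen_inL[OF H, of PY PX s "0" "Suc (Suc (0))"] sw by (simp add: a11_def)
  have g4: "inL L n s [PI,PY,PX,PI]" using gen_inL[OF H, of PY PX s "Suc (0)" "Suc (0)"] sw by (simp add: a11_def)
  have g5: "inL L n s [PI,PI,PY,PX]" using gen_inL[OF H, of PY PX s "Suc (Suc (0))" "0"] sw by (simp add: a11_def)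
  have g6: "inL L n s [PY,PZ,PI,PI]" using gen_inL[OF H, of PY PZ s "0" "Suc (Suc (0))"] sw by (simp add: a11_def)
  have g7: "inL L n s [PI,PY,PZ,PI]" using gen_inL[OF H, of PY PZ s "Suc (0)" "Suc (0)"] sw by (simp add: a11_def)
  have g8: "inL L n s [PI,PI,PY,PZ]" using gen_inL[OF H, of PY PZ s "Suc (Suc (0))" "0"] sw by (simp add: a11_def)
  have d0: "inL L n s [PY,PY,PY,PI]" using wstep[OF L _ _ g1 g6] sw by simp
  have d1: "inL L n s [PI,PZ,PY,PI]" using wstep[OF L _ _ g3 d0] sw by simp
  have d2: "inL L n s [PI,PY,PY,PY]" using wstep[OF L _ _ g2 g7] sw by simp
  have d3: "inL L n s [PX,PZ,PY,PI]" using wstep[OF L _ _ g0 g1] sw by simp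
  have d4: "inL L n s [PY,PY,PZ,PY]" using wstep[OF L _ _ g2 d0] sw by simp
  have d5: "inL L n s [PY,PI,PY,PY]" using wstep[OF L _ _ g4 d4] sw by simp
  have d6: "inL L n s [PZ,PZ,PI,PY]" using wstep[OF L _ _ d3 d5] sw by simp
  have d7: "inL L n s [PZ,PX,PY,PI]" using wstep[OF L _ _ d2 d6] sw by simp
  have d8: "inL L n s [PZ,PY,PI,PI]" using wstep[OF L _ _ d1 d7] sw by simp
  show ?thesis using d8 .
qed

lemma der11_1:
  assumes H: "\<forall>P\<in>{two_local n j A B | j A B. (A, B) \<in> a11 \<and> j + 1 < n}. \<i> \<cdot>\<^sub>m pauli_string_mat P \<in> L"
    and L: "real_lie_subalg_u (2^n) L" and sw: "s + 4 \<le> n"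
  shows "inL L n s [PI,PZ,PY,PI]"
proof -
  have g0: "inL L n s [PX,PY,PI,PI]" using gen_inL[OF H, of PX PY s "0" "Suc (Suc (0))"] sw by (simp add: a11_def)
  have g1: "inL L n s [PI,PX,PY,PI]" using gen_inL[OF H, of PX PY s "Suc (0)" "Suc (0)"] sw by (simp add: a11_def)
  have g2: "inL L n s [PI,PI,PX,PY]" using gen_inL[OF H, of PX PY s "Suc (Suc (0))" "0"] sw by (simp add: a11_def)
  have g3: "inL L n s [PY,PX,PI,PI]" using gen_inL[OF H, of PY PX s "0" "Suc (Suc (0))"] sw by (simp add: a11_def)
  have g4: "inL L n s [PI,PY,PX,PI]" using gen_inL[OF H, of PY PX s "Suc (0)" "Suc (0)"] sw by (simp add: a11_def)
  have g5: "inL L n s [PI,PI,PY,PX]" using gen_inL[OF H, of PY PX s "Suc (Suc (0))" "0"] sw by (simp add: a11_def)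
  have g6: "inL L n s [PY,PZ,PI,PI]" using gen_inL[OF H, of PY PZ s "0" "Suc (Suc (0))"] sw by (simp add: a11_def)
  have g7: "inL L n s [PI,PY,PZ,PI]" using gen_inL[OF H, of PY PZ s "Suc (0)" "Suc (0)"] sw by (simp add: a11_def)
  have g8: "inL L n s [PI,PI,PY,PZ]" using gen_inL[OF H, of PY PZ s "Suc (Suc (0))" "0"] sw by (simp add: a11_def)
  have d0: "inL L n s [PY,PY,PY,PI]" using wstep[OF L _ _ g1 g6] sw by simp
  have d1: "inL L n s [PI,PZ,PY,PI]" using wstep[OF L _ _ g3 d0] sw by simp
  show ?thesis using d1 .
qed

lemma der11_2:
  assumes H: "\<forall>P\<in>{two_local n j A B | j A B. (A, B) \<in> a11 \<and> j + 1 < n}. \<i> \<cdot>\<^sub>m pauli_string_mat P \<in> L"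
    and L: "real_lie_subalg_u (2^n) L" and sw: "s + 4 \<le> n"
  shows "inL L n s [PI,PI,PZ,PY]"
proof -
  have g0: "inL L n s [PX,PY,PI,PI]" using gen_inL[OF H, of PX PY s "0" "Suc (Suc (0))"] sw by (simp add: a11_def)
  have g1: "inL L n s [PI,PX,PY,PI]" using gen_inL[OF H, of PX PY s "Suc (0)" "Suc (0)"] sw by (simp add: a11_def)
  have g2: "inL L n s [PI,PI,PX,PY]" using gen_inL[OF H, of PX PY s "Suc (Suc (0))" "0"] sw by (simp add: a11_def)
  have g3: "inL L n s [PY,PX,PI,PI]" using gen_inL[OF H, of PY PX s "0" "Suc (Suc (0))"] sw by (simp add: a11_def)
  have g4: "inL L n s [PI,PY,PX,PI]" using gen_inL[OF H, of PY PX s "Suc (0)" "Suc (0)"] sw by (simp add: a11_def)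
  have g5: "inL L n s [PI,PI,PY,PX]" using gen_inL[OF H, of PY PX s "Suc (Suc (0))" "0"] sw by (simp add: a11_def)
  have g6: "inL L n s [PY,PZ,PI,PI]" using gen_inL[OF H, of PY PZ s "0" "Suc (Suc (0))"] sw by (simp add: a11_def)
  have g7: "inL L n s [PI,PY,PZ,PI]" using gen_inL[OF H, of PY PZ s "Suc (0)" "Suc (0)"] sw by (simp add: a11_def)
  have g8: "inL L n s [PI,PI,PY,PZ]" using gen_inL[OF H, of PY PZ s "Suc (Suc (0))" "0"] sw by (simp add: a11_def)
  have d0: "inL L n s [PI,PY,PY,PY]" using wstep[OF L _ _ g2 g7] sw by simp
  have d1: "inL L n s [PI,PI,PZ,PY]" using wstep[OF L _ _ g4 d0] sw by simp
  show ?thesis using d1 .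
qed

lemma der13zz_0:
  assumes H: "\<forall>P\<in>{two_local n j A B | j A B. (A, B) \<in> a13 \<and> j + 1 < n}. \<i> \<cdot>\<^sub>m pauli_string_mat P \<in> L"
    and L: "real_lie_subalg_u (2^n) L" and sw: "s + 3 \<le> n"
  shows "inL L n s [PZ,PZ,PI]"
proof -
  have g0: "inL L n s [PX,PX,PI]" using gen_inL[OF H, of PX PX s "0" "Suc (0)"] sw by (simp add: a13_def)
  have g1: "inL L n s [PI,PX,PX]" using gen_inL[OF H, of PX PX s "Suc (0)" "0"] sw by (simp add: a13_def)
  have g2: "inL L n s [PY,PY,PI]" using gen_inL[OF H, of PY PY s "0" "Suc (0)"] sw by (simp add: a13_def)
  have g3: "inL L n s [PI,PY,PY]" using gen_inL[OF H, of PY PY s "Suc (0)" "0"] sw by (simp add: a13_def)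
  have g4: "inL L n s [PY,PZ,PI]" using gen_inL[OF H, of PY PZ s "0" "Suc (0)"] sw by (simp add: a13_def)
  have g5: "inL L n s [PI,PY,PZ]" using gen_inL[OF H, of PY PZ s "Suc (0)" "0"] sw by (simp add: a13_def)
  have d0: "inL L n s [PX,PZ,PY]" using wstep[OF L _ _ g0 g3] sw by simp
  have d1: "inL L n s [PY,PY,PX]" using wstep[OF L _ _ g1 g4] sw by simp
  have d2: "inL L n s [PY,PI,PY]" using wstep[OF L _ _ g5 d1] sw by simp
  have d3: "inL L n s [PZ,PZ,PI]" using wstep[OF L _ _ d0 d2] sw by simp
  show ?thesis using d3 .
qed

lemma der13zz_1:
  assumes H: "\<forall>P\<in>{two_local n j A B | j A B. (A, B) \<in> a13 \<and> j + 1 < n}. \<i> \<cdot>\<^sub>m pauli_string_mat P \<in> L"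
    and L: "real_lie_subalg_u (2^n) L" and sw: "s + 3 \<le> n"
  shows "inL L n s [PI,PZ,PZ]"
proof -
  have g0: "inL L n s [PX,PX,PI]" using gen_inL[OF H, of PX PX s "0" "Suc (0)"] sw by (simp add: a13_def)
  have g1: "inL L n s [PI,PX,PX]" using gen_inL[OF H, of PX PX s "Suc (0)" "0"] sw by (simp add: a13_def)
  have g2: "inL L n s [PY,PY,PI]" using gen_inL[OF H, of PY PY s "0" "Suc (0)"] sw by (simp add: a13_def)
  have g3: "inL L n s [PI,PY,PY]" using gen_inL[OF H, of PY PY s "Suc (0)" "0"] sw by (simp add: a13_def)
  have g4: "inL L n s [PY,PZ,PI]" using gen_inL[OF H, of PY PZ s "0" "Suc (0)"] sw by (simp add: a13_def)
  have g5: "inL L n s [PI,PY,PZ]" using gen_inL[OF H, of PY PZ s "Suc (0)" "0"] sw by (simp add: a13_def)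
  have d0: "inL L n s [PI,PX,PI]" using wstep[OF L _ _ g2 g4] sw by simp
  have d1: "inL L n s [PI,PZ,PZ]" using wstep[OF L _ _ g5 d0] sw by simp
  show ?thesis using d1 .
qed

lemma der13zy_0:
  assumes H: "\<forall>P\<in>{two_local n j A B | j A B. (A, B) \<in> a13 \<and> j + 1 < n}. \<i> \<cdot>\<^sub>m pauli_string_mat P \<in> L"
    and L: "real_lie_subalg_u (2^n) L" and sw: "s + 3 \<le> n"
  shows "inL L n s [PZ,PY,PI]"
proof -
  have g0: "inL L n s [PX,PX,PI]" using gen_inL[OF H, of PX PX s "0" "Suc (0)"] sw by (simp add: a13_def)
  have g1: "inL L n s [PI,PX,PX]" using gen_inL[OF H, of PX PX s "Suc (0)" "0"] sw by (simp add: a13_def)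
  have g2: "inL L n s [PY,PY,PI]" using gen_inL[OF H, of PY PY s "0" "Suc (0)"] sw by (simp add: a13_def)
  have g3: "inL L n s [PI,PY,PY]" using gen_inL[OF H, of PY PY s "Suc (0)" "0"] sw by (simp add: a13_def)
  have g4: "inL L n s [PY,PZ,PI]" using gen_inL[OF H, of PY PZ s "0" "Suc (0)"] sw by (simp add: a13_def)
  have g5: "inL L n s [PI,PY,PZ]" using gen_inL[OF H, of PY PZ s "Suc (0)" "0"] sw by (simp add: a13_def)
  have d0: "inL L n s [PY,PY,PX]" using wstep[OF L _ _ g1 g4] sw by simp
  have d1: "inL L n s [PX,PZ,PY]" using wstep[OF L _ _ g0 g3] sw by simp
  have d2: "inL L n s [PI,PX,PI]" using wstep[OF L _ _ g2 g4] sw by simp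
  have d3: "inL L n s [PI,PZ,PZ]" using wstep[OF L _ _ g5 d2] sw by simp
  have d4: "inL L n s [PX,PI,PX]" using wstep[OF L _ _ d1 d3] sw by simp
  have d5: "inL L n s [PZ,PY,PI]" using wstep[OF L _ _ d0 d4] sw by simp
  show ?thesis using d5 .
qed

lemma der13zy_1:
  assumes H: "\<forall>P\<in>{two_local n j A B | j A B. (A, B) \<in> a13 \<and> j + 1 < n}. \<i> \<cdot>\<^sub>m pauli_string_mat P \<in> L"
    and L: "real_lie_subalg_u (2^n) L" and sw: "s + 3 \<le> n"
  shows "inL L n s [PI,PZ,PY]"
proof -
  have g0: "inL L n s [PX,PX,PI]" using gen_inL[OF H, of PX PX s "0" "Suc (0)"] sw by (simp add: a13_def)
  have g1: "inL L n s [PI,PX,PX]" using gen_inL[OF H, of PX PX s "Suc (0)" "0"] sw by (simp add: a13_def)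
  have g2: "inL L n s [PY,PY,PI]" using gen_inL[OF H, of PY PY s "0" "Suc (0)"] sw by (simp add: a13_def)
  have g3: "inL L n s [PI,PY,PY]" using gen_inL[OF H, of PY PY s "Suc (0)" "0"] sw by (simp add: a13_def)
  have g4: "inL L n s [PY,PZ,PI]" using gen_inL[OF H, of PY PZ s "0" "Suc (0)"] sw by (simp add: a13_def)
  have g5: "inL L n s [PI,PY,PZ]" using gen_inL[OF H, of PY PZ s "Suc (0)" "0"] sw by (simp add: a13_def)
  have d0: "inL L n s [PI,PX,PI]" using wstep[OF L _ _ g2 g4] sw by simp
  have d1: "inL L n s [PI,PZ,PY]" using wstep[OF L _ _ g3 d0] sw by simp
  show ?thesis using d1 .
qed

lemma der20_0:
  assumes H: "\<forall>P\<in>{two_local n j A B | j A B. (A, B) \<in> a20 \<and> j + 1 < n}. \<i> \<cdot>\<^sub>m pauli_string_mat P \<in> L"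
    and L: "real_lie_subalg_u (2^n) L" and sw: "s + 3 \<le> n"
  shows "inL L n s [PY,PZ,PI]"
proof -
  have g0: "inL L n s [PX,PX,PI]" using gen_inL[OF H, of PX PX s "0" "Suc (0)"] sw by (simp add: a20_def)
  have g1: "inL L n s [PI,PX,PX]" using gen_inL[OF H, of PX PX s "Suc (0)" "0"] sw by (simp add: a20_def)
  have g2: "inL L n s [PY,PY,PI]" using gen_inL[OF H, of PY PY s "0" "Suc (0)"] sw by (simp add: a20_def)
  have g3: "inL L n s [PI,PY,PY]" using gen_inL[OF H, of PY PY s "Suc (0)" "0"] sw by (simp add: a20_def)
  have g4: "inL L n s [PZ,PZ,PI]" using gen_inL[OF H, of PZ PZ s "0" "Suc (0)"] sw by (simp add: a20_def)
  have g5: "inL L n s [PI,PZ,PZ]" using gen_inL[OF H, of PZ PZ s "Suc (0)" "0"] sw by (simp add: a20_def)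
  have g6: "inL L n s [PZ,PY,PI]" using gen_inL[OF H, of PZ PY s "0" "Suc (0)"] sw by (simp add: a20_def)
  have g7: "inL L n s [PI,PZ,PY]" using gen_inL[OF H, of PZ PY s "Suc (0)" "0"] sw by (simp add: a20_def)
  have d0: "inL L n s [PY,PX,PY]" using wstep[OF L _ _ g2 g7] sw by simp
  have d1: "inL L n s [PY,PZ,PI]" using wstep[OF L _ _ g3 d0] sw by simp
  show ?thesis using d1 .
qed

lemma der20_1:
  assumes H: "\<forall>P\<in>{two_local n j A B | j A B. (A, B) \<in> a20 \<and> j + 1 < n}. \<i> \<cdot>\<^sub>m pauli_string_mat P \<in> L"
    and L: "real_lie_subalg_u (2^n) L" and sw: "s + 3 \<le> n"
  shows "inL L n s [PI,PY,PZ]"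
proof -
  have g0: "inL L n s [PX,PX,PI]" using gen_inL[OF H, of PX PX s "0" "Suc (0)"] sw by (simp add: a20_def)
  have g1: "inL L n s [PI,PX,PX]" using gen_inL[OF H, of PX PX s "Suc (0)" "0"] sw by (simp add: a20_def)
  have g2: "inL L n s [PY,PY,PI]" using gen_inL[OF H, of PY PY s "0" "Suc (0)"] sw by (simp add: a20_def)
  have g3: "inL L n s [PI,PY,PY]" using gen_inL[OF H, of PY PY s "Suc (0)" "0"] sw by (simp add: a20_def)
  have g4: "inL L n s [PZ,PZ,PI]" using gen_inL[OF H, of PZ PZ s "0" "Suc (0)"] sw by (simp add: a20_def)
  have g5: "inL L n s [PI,PZ,PZ]" using gen_inL[OF H, of PZ PZ s "Suc (0)" "0"] sw by (simp add: a20_def)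
  have g6: "inL L n s [PZ,PY,PI]" using gen_inL[OF H, of PZ PY s "0" "Suc (0)"] sw by (simp add: a20_def)
  have g7: "inL L n s [PI,PZ,PY]" using gen_inL[OF H, of PZ PY s "Suc (0)" "0"] sw by (simp add: a20_def)
  have d0: "inL L n s [PI,PX,PI]" using wstep[OF L _ _ g3 g7] sw by simp
  have d1: "inL L n s [PI,PY,PZ]" using wstep[OF L _ _ g5 d0] sw by simp
  show ?thesis using d1 .
qed


lemma inL_two: "inL L n s (replicate t PI @ [A,B] @ replicate u PI) \<Longrightarrow> s+t+2+u \<le> n \<Longrightarrow>
   \<i> \<cdot>\<^sub>m pauli_string_mat (two_local n (s+t) A B) \<in> L"
  unfolding inL_def by (metis emb_two)

lemma lie_gen_sub:
  assumes "\<And>L. real_lie_subalg_u (2^n) L \<Longrightarrow> \<forall>P\<in>S. \<i> \<cdot>\<^sub>m pauli_string_mat P \<in> L \<Longrightarrow>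
     \<forall>P\<in>S'. \<i> \<cdot>\<^sub>m pauli_string_mat P \<in> L"
  shows "lie_gen n S' \<subseteq> lie_gen n S"
  unfolding lie_gen_def by (rule Inter_anti_mono) (use assms in blast)

lemma part1:
  assumes n: "n \<ge> 4"
  shows "G_alg a11 n = G_alg a16 n"
proof
  show "G_alg a16 n \<subseteq> G_alg a11 n"
    unfolding G_alg_def
  proof (rule lie_gen_sub)
    fix L assume L: "real_lie_subalg_u (2^n) L"
      and H: "\<forall>P\<in>{two_local n j A B | j A B. (A, B) \<in> a11 \<and> j + 1 < n}. \<i> \<cdot>\<^sub>m pauli_string_mat P \<in> L"
    show "\<forall>P\<in>{two_local n j A B | j A B. (A, B) \<in> a16 \<and> j + 1 < n}. \<i> \<cdot>\<^sub>m pauli_string_mat P \<in> L"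
    proof (intro ballI)
      fix P assume "P \<in> {two_local n j A B | j A B. (A, B) \<in> a16 \<and> j + 1 < n}"
      then obtain j A B where P: "P = two_local n j A B" and AB: "(A,B) \<in> a16" and j: "j + 1 < n" by blast
      show "\<i> \<cdot>\<^sub>m pauli_string_mat P \<in> L"
      proof (cases "(A,B) \<in> a11")
        case True thus ?thesis using H P j by blast
      next
        case False
        hence AB: "A = PZ" "B = PY" using AB by (auto simp: a11_def a16_def)
        show ?thesis
        proof (cases "j + 4 \<le> n")
          case True
          have "inL L n j (replicate 0 PI @ [PZ,PY] @ replicate (Suc (Suc 0)) PI)"
            using der11_0[OF H L True] by simp
          from inL_two[OF this] True show ?thesis unfolding P AB by simp
        next
          case False
          define s where "s = n - 4"
          have sw: "s + 4 \<le> n" using n s_def by simp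
          have "j = s + 1 \<or> j = s + 2" using False j n s_def by auto
          thus ?thesis
          proof
            assume js: "j = s + 1"
            have "inL L n s (replicate (Suc 0) PI @ [PZ,PY] @ replicate (Suc 0) PI)"
              using der11_1[OF H L sw] by simp
            from inL_two[OF this] sw show ?thesis unfolding P AB js by simp
          next
            assume js: "j = s + 2"
            have "inL L n s (replicate (Suc (Suc 0)) PI @ [PZ,PY] @ replicate 0 PI)"
              using der11_2[OF H L sw] by simp
            from inL_two[OF this] sw show ?thesis unfolding P AB js by simp
          qed
        qed
      qed
    qed
  qed
  show "G_alg a11 n \<subseteq> G_alg a16 n"
    unfolding G_alg_def
    by (rule lie_gen_sub) (auto simp: a11_def a16_def)
qed

lemma part2:
  assumes n: "n \<ge> 3"
  shows "G_alg a13 n = G_alg a20 n"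
proof
  show "G_alg a20 n \<subseteq> G_alg a13 n"
    unfolding G_alg_def
  proof (rule lie_gen_sub)
    fix L assume L: "real_lie_subalg_u (2^n) L"
      and H: "\<forall>P\<in>{two_local n j A B | j A B. (A, B) \<in> a13 \<and> j + 1 < n}. \<i> \<cdot>\<^sub>m pauli_string_mat P \<in> L"
    show "\<forall>P\<in>{two_local n j A B | j A B. (A, B) \<in> a20 \<and> j + 1 < n}. \<i> \<cdot>\<^sub>m pauli_string_mat P \<in> L"
    proof (intro ballI)
      fix P assume "P \<in> {two_local n j A B | j A B. (A, B) \<in> a20 \<and> j + 1 < n}"
      then obtain j A B where P: "P = two_local n j A B" and AB: "(A,B) \<in> a20" and j: "j + 1 < n" by blast
      show "\<i> \<cdot>\<^sub>m pauli_string_mat P \<in> L"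
      proof (cases "(A,B) \<in> a13")
        case True thus ?thesis using H P j by blast
      next
        case False
        hence AB: "(A = PZ \<and> B = PZ) \<or> (A = PZ \<and> B = PY)" using AB by (auto simp: a13_def a20_def)
        show ?thesis
        proof (cases "j + 3 \<le> n")
          case True
          have "inL L n j (replicate 0 PI @ [PZ,PZ] @ replicate (Suc 0) PI)"
            using der13zz_0[OF H L True] by simp
          note z = inL_two[OF this]
          have "inL L n j (replicate 0 PI @ [PZ,PY] @ replicate (Suc 0) PI)"
            using der13zy_0[OF H L True] by simp
          note y = inL_two[OF this]
          show ?thesis using AB z y True unfolding P by auto
        next
          case False
          define s where "s = n - 3"
          have sw: "s + 3 \<le> n" using n s_def by simp
          have js: "j = s + 1" using False j n s_def by auto
          have "inL L n s (replicate (Suc 0) PI @ [PZ,PZ] @ replicate 0 PI)"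
            using der13zz_1[OF H L sw] by simp
          note z = inL_two[OF this]
          have "inL L n s (replicate (Suc 0) PI @ [PZ,PY] @ replicate 0 PI)"
            using der13zy_1[OF H L sw] by simp
          note y = inL_two[OF this]
          show ?thesis using AB z y sw unfolding P js by auto
        qed
      qed
    qed
  qed
  show "G_alg a13 n \<subseteq> G_alg a20 n"
    unfolding G_alg_def
  proof (rule lie_gen_sub)
    fix L assume L: "real_lie_subalg_u (2^n) L"
      and H: "\<forall>P\<in>{two_local n j A B | j A B. (A, B) \<in> a20 \<and> j + 1 < n}. \<i> \<cdot>\<^sub>m pauli_string_mat P \<in> L"
    show "\<forall>P\<in>{two_local n j A B | j A B. (A, B) \<in> a13 \<and> j + 1 < n}. \<i> \<cdot>\<^sub>m pauli_string_mat P \<in> L"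
    proof (intro ballI)
      fix P assume "P \<in> {two_local n j A B | j A B. (A, B) \<in> a13 \<and> j + 1 < n}"
      then obtain j A B where P: "P = two_local n j A B" and AB: "(A,B) \<in> a13" and j: "j + 1 < n" by blast
      show "\<i> \<cdot>\<^sub>m pauli_string_mat P \<in> L"
      proof (cases "(A,B) \<in> a20")
        case True thus ?thesis using H P j by blast
      next
        case False
        hence AB: "A = PY" "B = PZ" using AB by (auto simp: a13_def a20_def)
        show ?thesis
        proof (cases "j + 3 \<le> n")
          case True
          have "inL L n j (replicate 0 PI @ [PY,PZ] @ replicate (Suc 0) PI)"
            using der20_0[OF H L True] by simp
          from inL_two[OF this] True show ?thesis unfolding P AB by simp
        next
          case False
          define s where "s = n - 3"
          have sw: "s + 3 \<le> n" using n s_def by simp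
          have js: "j = s + 1" using False j n s_def by auto
          have "inL L n s (replicate (Suc 0) PI @ [PY,PZ] @ replicate 0 PI)"
            using der20_1[OF H L sw] by simp
          from inL_two[OF this] sw show ?thesis unfolding P AB js by simp
        qed
      qed
    qed
  qed
qed

theorem mainTheorem10:
  shows "(\<forall>n::nat. n \<ge> 4 \<longrightarrow> G_alg a11 n = G_alg a16 n) \<and>
         (\<forall>n::nat. n \<ge> 3 \<longrightarrow> G_alg a13 n = G_alg a20 n)"
  using part1 part2 by blast

end
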